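(* Consider a reasonable rank-one construction with symbolic model $\Omega$. Fix $\varepsilon>0$ and an integer $\ell\ge1$. Then there exists $N(\varepsilon,\ell)$ such that for every integer $N\ge N(\varepsilon,\ell)$ and every $\omega\in\Omega$, the word $W=\omega_1\omega_2\cdots\omega_N$ can be written as $W=ABC$ with (possibly empty) words $A,B,C$ such that $B=1^s$ for some $s\ge0$, and there is a family of occurrences, at pairwise disjoint positions, of building blocks $B_n$ with $n\ge\ell$ inside $A$ and inside $C$, such that the total number of positions of $A$ and of $C$ not covered by these occurrences is at most $\varepsilon N$.
   Context: Rank-one parameters: integers $p_n\ge2$, integers $s_{n,i}\ge0$ ($0\le i\le p_n-1$), $h_1=1$, $h_{n+1}=p_nh_n+\sum_is_{n,i}$, $\sum_n\frac1{h_{n+1}}\sum_is_{n,i}<\infty$. Reasonable: $t_n:=\max_{0\le i\le p_n-1}s_{n,i}=o(h_n)$. Building blocks: $B_1=0$, $B_{n+1}=B_n1^{s_{n,0}}B_n1^{s_{n,1}}\cdots B_n1^{s_{n,p_n-1}}$ (words over $\{0,1\}$, $|B_n|=h_n$). $\Omega\subset\{0,1\}^{\mathbb Z}$ is the set of sequences all of whose finite subwords are subwords of some $B_m$. *)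

theory Defs
  imports Complex_Main "HOL-Library.Sublist"
begin

text \<open>Rank-one parameters: p n (n >= 1) is the number of copies, s n i the spacers.
  Letters are natural numbers 0 and 1. Index 0 is a dummy (B 0 = B 1 = [0]);
  the paper's indexing starts at 1.\<close>

fun block :: "(nat \<Rightarrow> nat) \<Rightarrow> (nat \<Rightarrow> nat \<Rightarrow> nat) \<Rightarrow> nat \<Rightarrow> nat list" where
  "block p s 0 = [0]"
| "block p s (Suc n) =
     (if n = 0 then [0]
      else concat (map (\<lambda>i. block p s n @ replicate (s n i) 1) [0..<p n]))"

definition height :: "(nat \<Rightarrow> nat) \<Rightarrow> (nat \<Rightarrow> nat \<Rightarrow> nat) \<Rightarrow> nat \<Rightarrow> nat" where
  "height p s n = length (block p s n)"

definition spacer_max :: "(nat \<Rightarrow> nat) \<Rightarrow> (nat \<Rightarrow> nat \<Rightarrow> nat) \<Rightarrow> nat \<Rightarrow> nat" where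
  "spacer_max p s n = Max {s n i | i. i < p n}"

definition rank_one_params :: "(nat \<Rightarrow> nat) \<Rightarrow> (nat \<Rightarrow> nat \<Rightarrow> nat) \<Rightarrow> bool" where
  "rank_one_params p s \<longleftrightarrow>
     (\<forall>n\<ge>1. p n \<ge> 2) \<and>
     summable (\<lambda>n. real (\<Sum>i<p (Suc n). s (Suc n) i) / real (height p s (Suc (Suc n))))"

definition reasonable :: "(nat \<Rightarrow> nat) \<Rightarrow> (nat \<Rightarrow> nat \<Rightarrow> nat) \<Rightarrow> bool" where
  "reasonable p s \<longleftrightarrow>
     (\<forall>e>0. \<exists>n0. \<forall>n\<ge>n0. real (spacer_max p s n) \<le> e * real (height p s n))"

definition symbolic_model :: "(nat \<Rightarrow> nat) \<Rightarrow> (nat \<Rightarrow> nat \<Rightarrow> nat) \<Rightarrow> (int \<Rightarrow> nat) set" where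
  "symbolic_model p s =
     {\<omega>. \<forall>a b. a \<le> b \<longrightarrow> (\<exists>m\<ge>1. sublist (map \<omega> [a..b]) (block p s m))}"

text \<open>A family Occ of occurrences (start position i, 0-based, and level n) of
  building blocks of level >= l in the word X, at pairwise disjoint positions.\<close>
definition block_occurrences ::
  "(nat \<Rightarrow> nat) \<Rightarrow> (nat \<Rightarrow> nat \<Rightarrow> nat) \<Rightarrow> nat \<Rightarrow> nat list \<Rightarrow> (nat \<times> nat) set \<Rightarrow> bool" where
  "block_occurrences p s l X Occ \<longleftrightarrow>
     (\<forall>(i, n)\<in>Occ. l \<le> n \<and> i + height p s n \<le> length X \<and>
                 take (height p s n) (drop i X) = block p s n) \<and>
     (\<forall>(i, n)\<in>Occ. \<forall>(j, m)\<in>Occ. (i, n) \<noteq> (j, m) \<longrightarrow>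
        {i..<i + height p s n} \<inter> {j..<j + height p s m} = {})"

definition uncovered ::
  "(nat \<Rightarrow> nat) \<Rightarrow> (nat \<Rightarrow> nat \<Rightarrow> nat) \<Rightarrow> nat list \<Rightarrow> (nat \<times> nat) set \<Rightarrow> nat" where
  "uncovered p s X Occ = card ({..<length X} - (\<Union>(i, n)\<in>Occ. {i..<i + height p s n}))"

end

theory Submission
  imports Defs
begin


definition good :: "(nat\<Rightarrow>nat) \<Rightarrow> (nat\<Rightarrow>nat\<Rightarrow>nat) \<Rightarrow> nat \<Rightarrow> nat list \<Rightarrow> real \<Rightarrow> bool" where
 "good p s l X b \<longleftrightarrow> (\<exists>Occ. block_occurrences p s l X Occ \<and> real (uncovered p s X Occ) \<le> b)"

lemma good_triv: "good p s l X (length X)"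
  unfolding good_def block_occurrences_def uncovered_def
  by (rule exI[of _ "{}"]) simp

lemma good_mono: "good p s l X a \<Longrightarrow> a \<le> b \<Longrightarrow> good p s l X b"
  unfolding good_def by force

lemma good_block: "l \<le> k \<Longrightarrow> good p s l (block p s k) 0"
  unfolding good_def block_occurrences_def uncovered_def
  by (rule exI[of _ "{(0,k)}"]) (auto simp add: height_def)

lemma good_append:
  assumes "good p s l X a" "good p s l Y b" shows "good p s l (X @ Y) (a + b)"
proof -
  obtain OX where OX: "block_occurrences p s l X OX" "real (uncovered p s X OX) \<le> a"
    using assms(1) unfolding good_def by blast
  obtain OY where OY: "block_occurrences p s l Y OY" "real (uncovered p s Y OY) \<le> b"
    using assms(2) unfolding good_def by blast
  define sh where "sh = (\<lambda>(j::nat,m::nat). (j + length X, m))"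
  define Oc where "Oc = OX \<union> sh ` OY"
  let ?h = "height p s"
  have X1: "\<And>i k. (i,k) \<in> OX \<Longrightarrow> l \<le> k \<and> i + ?h k \<le> length X \<and> take (?h k) (drop i X) = block p s k"
    using OX(1) unfolding block_occurrences_def by blast
  have X2: "\<And>i k j m. (i,k) \<in> OX \<Longrightarrow> (j,m) \<in> OX \<Longrightarrow> (i,k) \<noteq> (j,m) \<Longrightarrow> {i..<i + ?h k} \<inter> {j..<j + ?h m} = {}"
    using OX(1) unfolding block_occurrences_def by blast
  have Y1: "\<And>i k. (i,k) \<in> OY \<Longrightarrow> l \<le> k \<and> i + ?h k \<le> length Y \<and> take (?h k) (drop i Y) = block p s k"
    using OY(1) unfolding block_occurrences_def by blast
  have Y2: "\<And>i k j m. (i,k) \<in> OY \<Longrightarrow> (j,m) \<in> OY \<Longrightarrow> (i,k) \<noteq> (j,m) \<Longrightarrow> {i..<i + ?h k} \<inter> {j..<j + ?h m} = {}"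
    using OY(1) unfolding block_occurrences_def by blast
  have P1: "l \<le> k \<and> i + ?h k \<le> length (X@Y) \<and> take (?h k) (drop i (X@Y)) = block p s k"
    if ik: "(i,k) \<in> Oc" for i k
  proof (cases "(i,k) \<in> OX")
    case True
    then show ?thesis using X1[OF True] by auto
  next
    case False
    then obtain j where j: "(j,k) \<in> OY" "i = j + length X" using ik unfolding Oc_def sh_def by auto
    then show ?thesis using Y1[OF j(1)] by auto
  qed
  have P2: "{i..<i + ?h k} \<inter> {j..<j + ?h m} = {}"
    if H: "(i,k) \<in> Oc" "(j,m) \<in> Oc" "(i,k) \<noteq> (j,m)" for i k j m
  proof -
    consider "(i,k) \<in> OX" "(j,m) \<in> OX" | "(i,k) \<in> OX" "(j,m) \<notin> OX" | "(i,k) \<notin> OX" "(j,m) \<in> OX"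
      | "(i,k) \<notin> OX" "(j,m) \<notin> OX" by blast
    then show ?thesis
    proof cases
      case 1 then show ?thesis using X2 H by blast
    next
      case 2
      then obtain j' where j': "(j',m) \<in> OY" "j = j' + length X" using H unfolding Oc_def sh_def by auto
      show ?thesis using X1[OF 2(1)] j' by auto
    next
      case 3
      then obtain i' where i': "(i',k) \<in> OY" "i = i' + length X" using H unfolding Oc_def sh_def by auto
      show ?thesis using X1[OF 3(2)] i' by auto
    next
      case 4
      then obtain j' where j': "(j',m) \<in> OY" "j = j' + length X" using H unfolding Oc_def sh_def by auto
      obtain i' where i': "(i',k) \<in> OY" "i = i' + length X" using H 4 unfolding Oc_def sh_def by auto
      have "(i',k) \<noteq> (j',m)" using H(3) i' j' by auto
      then have "{i'..<i' + ?h k} \<inter> {j'..<j' + ?h m} = {}" using Y2 i'(1) j'(1) by blast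
      show ?thesis
      proof (rule ccontr)
        assume "{i..<i + ?h k} \<inter> {j..<j + ?h m} \<noteq> {}"
        then obtain x where "x \<in> {i..<i + ?h k}" "x \<in> {j..<j + ?h m}" by blast
        then have "x - length X \<in> {i'..<i' + ?h k} \<inter> {j'..<j' + ?h m}" using i' j' by auto
        then show False using \<open>{i'..<i' + ?h k} \<inter> {j'..<j' + ?h m} = {}\<close> by blast
      qed
    qed
  qed
  have bo: "block_occurrences p s l (X@Y) Oc"
    unfolding block_occurrences_def using P1 P2 by blast
  let ?U = "\<lambda>Z Oc. {..<length Z} - (\<Union>(i, n)\<in>Oc. {i..<i + ?h n})"
  have sub: "?U (X@Y) Oc \<subseteq> ?U X OX \<union> (\<lambda>y. y + length X) ` ?U Y OY"
  proof
    fix x assume x: "x \<in> ?U (X@Y) Oc"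
    show "x \<in> ?U X OX \<union> (\<lambda>y. y + length X) ` ?U Y OY"
    proof (cases "x < length X")
      case True
      have "(\<Union>(i, n)\<in>OX. {i..<i + ?h n}) \<subseteq> (\<Union>(i, n)\<in>Oc. {i..<i + ?h n})"
        unfolding Oc_def by blast
      then have "x \<in> ?U X OX" using x True by blast
      then show ?thesis by blast
    next
      case False
      then obtain y where y: "x = y + length X" by (metis add.commute le_Suc_ex not_less)
      have "y \<in> ?U Y OY"
      proof
        show "y \<in> {..<length Y}" using x y by auto
        show "y \<notin> (\<Union>(i, n)\<in>OY. {i..<i + ?h n})"
        proof
          assume "y \<in> (\<Union>(i, n)\<in>OY. {i..<i + ?h n})"
          then obtain i k where ik: "(i,k) \<in> OY" "i \<le> y" "y < i + ?h k" by auto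
          have "sh (i,k) \<in> Oc" unfolding Oc_def using ik(1) by blast
          then have 1: "(i + length X, k) \<in> Oc" unfolding sh_def by simp
          have "x \<in> {i + length X..<i + length X + ?h k}" using ik y by simp
          then have "x \<in> (\<Union>(i, n)\<in>Oc. {i..<i + ?h n})" using 1 by blast
          then show False using x by blast
        qed
      qed
      then show ?thesis using y by blast
    qed
  qed
  have "uncovered p s (X@Y) Oc \<le> card (?U X OX \<union> (\<lambda>y. y + length X) ` ?U Y OY)"
    unfolding uncovered_def by (rule card_mono[OF _ sub]) auto
  also have "\<dots> \<le> card (?U X OX) + card ((\<lambda>y. y + length X) ` ?U Y OY)" by (rule card_Un_le)
  also have "\<dots> \<le> uncovered p s X OX + uncovered p s Y OY"
  proof -
    have "card ((\<lambda>y. y + length X) ` ?U Y OY) \<le> card (?U Y OY)" by (rule card_image_le) simp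
    then show ?thesis unfolding uncovered_def by simp
  qed
  finally have "uncovered p s (X@Y) Oc \<le> uncovered p s X OX + uncovered p s Y OY" .
  then have "real (uncovered p s (X@Y) Oc) \<le> real (uncovered p s X OX) + real (uncovered p s Y OY)"
    by (metis of_nat_add of_nat_le_iff)
  then have "real (uncovered p s (X@Y) Oc) \<le> a + b" using OX(2) OY(2) by linarith
  then show ?thesis unfolding good_def using bo by blast
qed

lemma good_concat: "(\<And>x. x \<in> set L \<Longrightarrow> good p s l x (f x)) \<Longrightarrow> good p s l (concat L) (sum_list (map f L))"
proof (induction L)
  case Nil
  then show ?case using good_triv[of p s l "[]"] by simp
next
  case (Cons a L)
  then show ?case using good_append[of p s l a "f a" "concat L"] by simp
qed

lemma good_rep: "good p s l (replicate r x) (real r)"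
  using good_triv[of p s l "replicate r x"] by simp



lemma sublist_replicate: "sublist W (replicate s x) \<Longrightarrow> W = replicate (length W) x \<and> length W \<le> s"
proof -
  assume a: "sublist W (replicate s x)"
  have "set W \<subseteq> {x}" using set_mono_sublist[OF a] by (auto split: if_splits)
  then have "replicate (length W) x = W" by (intro replicate_length_same) auto
  moreover have "length W \<le> s" using sublist_length_le[OF a] by simp
  ultimately show ?thesis by simp
qed

lemma length_concat_upt: "length (concat (map g [a..<b])) = (\<Sum>i\<in>{a..<b}. length (g i))"
proof (induction b)
  case (Suc b)
  then show ?case by (cases "a \<le> b") auto
qed simp

lemma good_concat_upt: "(\<And>i. a \<le> i \<Longrightarrow> i < b \<Longrightarrow> good p s l (g i) (f i)) \<Longrightarrow>
   good p s l (concat (map g [a..<b])) (\<Sum>i\<in>{a..<b}. f i)"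
proof (induction b)
  case 0
  then show ?case using good_triv[of p s l "[]"] by simp
next
  case (Suc b)
  show ?case
  proof (cases "a \<le> b")
    case True
    have "good p s l (concat (map g [a..<b]) @ g b) ((\<Sum>i\<in>{a..<b}. f i) + f b)"
      using Suc True by (intro good_append) auto
    then show ?thesis using True by (simp add: add.commute)
  next
    case False
    then show ?thesis using good_triv[of p s l "[]"] by simp
  qed
qed

lemma prefix_concat_upt: "prefix P (concat (map g [0..<k])) \<Longrightarrow>
  \<exists>j\<le>k. \<exists>P'. P = concat (map g [0..<j]) @ P' \<and> (P' = [] \<or> (\<exists>i<k. prefix P' (g i)))"
proof (induction k arbitrary: P)
  case 0
  then show ?case by simp
next
  case (Suc k)
  then have "prefix P (concat (map g [0..<k]) @ g k)" by simp
  then consider "prefix P (concat (map g [0..<k]))" | us where "P = concat (map g [0..<k]) @ us" "prefix us (g k)"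
    unfolding prefix_append by blast
  then show ?case
  proof cases
    case 1
    from Suc.IH[OF this] obtain j P' where "j \<le> k" "P = concat (map g [0..<j]) @ P'" "P' = [] \<or> (\<exists>i<k. prefix P' (g i))"
      by blast
    then show ?thesis by (intro exI[of _ j] exI[of _ P']) auto
  next
    case 2
    then show ?thesis by (intro exI[of _ k] exI[of _ us]) auto
  qed
qed

lemma suffix_concat_upt: "suffix S (concat (map g [0..<k])) \<Longrightarrow>
  \<exists>j\<le>k. \<exists>S'. S = S' @ concat (map g [j..<k]) \<and> (S' = [] \<or> (\<exists>i<k. suffix S' (g i)))"
proof (induction k arbitrary: S)
  case 0
  then show ?case by (simp add: suffix_def)
next
  case (Suc k)
  then have "suffix S (concat (map g [0..<k]) @ g k)" by simp
  then consider "suffix S (g k)" | xs' where "S = xs' @ g k" "suffix xs' (concat (map g [0..<k]))"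
    unfolding suffix_append by blast
  then show ?case
  proof cases
    case 1
    then show ?thesis by (intro exI[of _ "Suc k"] exI[of _ S]) auto
  next
    case 2
    from Suc.IH[OF 2(2)] obtain j S' where j: "j \<le> k" "xs' = S' @ concat (map g [j..<k])" "S' = [] \<or> (\<exists>i<k. suffix S' (g i))"
      by blast
    have "S = S' @ concat (map g [j..<Suc k])" using j 2 by simp
    then show ?thesis using j by (intro exI[of _ j] exI[of _ S']) auto
  qed
qed

lemma sublist_concat_upt: "sublist W (concat (map g [0..<k])) \<Longrightarrow>
  (\<exists>i<k. sublist W (g i)) \<or>
  (\<exists>S a b P. W = S @ concat (map g [a..<b]) @ P \<and> b \<le> k \<and>
     (S = [] \<or> (\<exists>i<k. suffix S (g i))) \<and> (P = [] \<or> (\<exists>i<k. prefix P (g i))))"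
proof -
  assume "sublist W (concat (map g [0..<k]))"
  then obtain Z where Z: "prefix Z (concat (map g [0..<k]))" "suffix W Z" unfolding sublist_altdef by blast
  from prefix_concat_upt[OF Z(1)] obtain j P' where j: "j \<le> k" "Z = concat (map g [0..<j]) @ P'"
    "P' = [] \<or> (\<exists>i<k. prefix P' (g i))" by blast
  have "suffix W (concat (map g [0..<j]) @ P')" using Z(2) j(2) by simp
  then consider "suffix W P'" | W' where "W = W' @ P'" "suffix W' (concat (map g [0..<j]))"
    unfolding suffix_append by blast
  then show ?thesis
  proof cases
    case 1
    show ?thesis
    proof (cases "P' = []")
      case True
      then have "W = []" using 1 by (simp add: suffix_def)
      then show ?thesis by (intro disjI2 exI[of _ "[]"] exI[of _ 0] exI[of _ 0]) auto
    next
      case False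
      then obtain i where "i < k" "prefix P' (g i)" using j(3) by blast
      then have "sublist W (g i)" using 1
        by (meson prefix_imp_sublist suffix_imp_sublist sublist_order.dual_order.trans)
      then show ?thesis using \<open>i < k\<close> by blast
    qed
  next
    case 2
    from suffix_concat_upt[OF 2(2)] obtain a S where a: "a \<le> j" "W' = S @ concat (map g [a..<j])"
      "S = [] \<or> (\<exists>i<j. suffix S (g i))" by blast
    have "W = S @ concat (map g [a..<j]) @ P'" using 2 a by simp
    then show ?thesis using a j by (intro disjI2 exI[of _ S] exI[of _ a] exI[of _ j] exI[of _ P']) auto
  qed
qed



lemma block_Suc': "m \<ge> 1 \<Longrightarrow> block p s (Suc m) = concat (map (\<lambda>i. block p s m @ replicate (s m i) 1) [0..<p m])"
  by (cases m) auto

lemma height_Suc': "m \<ge> 1 \<Longrightarrow> height p s (Suc m) = p m * height p s m + (\<Sum>i<p m. s m i)"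
proof -
  assume m: "m \<ge> 1"
  have "height p s (Suc m) = (\<Sum>i\<in>{0..<p m}. length (block p s m @ replicate (s m i) 1))"
    unfolding height_def block_Suc'[OF m] by (rule length_concat_upt)
  also have "\<dots> = (\<Sum>i<p m. height p s m + s m i)" by (simp add: height_def atLeast0LessThan)
  also have "\<dots> = p m * height p s m + (\<Sum>i<p m. s m i)" by (simp add: sum.distrib)
  finally show ?thesis .
qed

lemma height_pos: "\<forall>m\<ge>1. p m \<ge> 2 \<Longrightarrow> height p s m \<ge> 1"
proof (induction m)
  case 0
  then show ?case by (simp add: height_def)
next
  case (Suc m)
  show ?case
  proof (cases "m = 0")
    case True
    then show ?thesis by (simp add: height_def)
  next
    case False
    then have "height p s (Suc m) \<ge> p m * height p s m" using height_Suc'[of m p s] by simp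
    moreover have "p m \<ge> 1" using Suc.prems False by (metis One_nat_def Suc_le_eq le_trans one_le_numeral zero_less_iff_neq_zero)
    moreover have "1 * 1 \<le> p m * height p s m" using calculation Suc by (intro mult_le_mono) auto
    ultimately show ?thesis by linarith
  qed
qed

lemma height_double: "\<forall>m\<ge>1. p m \<ge> 2 \<Longrightarrow> m \<ge> 1 \<Longrightarrow> height p s (Suc m) \<ge> 2 * height p s m"
proof -
  assume a: "\<forall>m\<ge>1. p m \<ge> 2" "m \<ge> 1"
  then have "height p s (Suc m) \<ge> p m * height p s m" using height_Suc'[of m p s] by simp
  moreover have "p m \<ge> 2" using a by blast
  then have "p m * height p s m \<ge> 2 * height p s m" by (intro mult_le_mono1)
  ultimately show ?thesis by linarith
qed

lemma block_prefix_Suc: "\<forall>m\<ge>1. p m \<ge> 2 \<Longrightarrow> prefix (block p s m) (block p s (Suc m))"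
proof (cases "m = 0")
  case True
  then show ?thesis by simp
next
  case False
  assume a: "\<forall>m\<ge>1. p m \<ge> 2"
  then have "p m > 0" using False by (metis One_nat_def Suc_le_eq less_2_cases_iff less_le_trans not_less0 not_one_le_zero zero_less_iff_neq_zero)
  then have "[0..<p m] = 0 # [1..<p m]" by (simp add: upt_rec)
  then show ?thesis using False by (simp add: block_Suc' prefix_def)
qed

lemma block_prefix_mono: "\<forall>m\<ge>1. p m \<ge> 2 \<Longrightarrow> m \<le> k \<Longrightarrow> prefix (block p s m) (block p s k)"
proof (induction k)
  case 0
  then show ?case by simp
next
  case (Suc k)
  then show ?case
    by (metis block_prefix_Suc le_Suc_eq prefix_order.order_trans prefix_order.refl)
qed



locale R1 =
  fixes p :: "nat \<Rightarrow> nat" and s :: "nat \<Rightarrow> nat \<Rightarrow> nat" and l n :: nat and \<delta> :: real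
  assumes n1: "n \<ge> 1" and ln: "l \<le> n" and dpos: "\<delta> > 0" and p2: "\<forall>m\<ge>1. p m \<ge> 2"
  and sp: "\<And>m i. n \<le> m \<Longrightarrow> i < p m \<Longrightarrow> real (s m i) \<le> \<delta> * real (height p s m)"
  and tail: "\<And>m. n \<le> m \<Longrightarrow> (\<Sum>j\<in>{n..<m}. real (\<Sum>i<p j. s j i) / real (height p s (Suc j))) \<le> \<delta>"
begin

definition seg where "seg m i = block p s m @ replicate (s m i) 1"
definition sig where "sig j = real (\<Sum>i<p j. s j i) / real (height p s (Suc j))"

lemma blockS: "m \<ge> 1 \<Longrightarrow> block p s (Suc m) = concat (map (seg m) [0..<p m])"
  unfolding seg_def by (rule block_Suc')

lemma len_seg: "length (seg m i) = height p s m + s m i"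
  by (simp add: seg_def height_def)

lemma hpos: "height p s m \<ge> 1" using height_pos[OF p2] .

lemma hdouble: "m \<ge> 1 \<Longrightarrow> real (height p s (Suc m)) \<ge> 2 * real (height p s m)"
  using height_double[OF p2, of m s] by simp

lemma full: "n \<le> m \<Longrightarrow> good p s l (block p s m) ((\<Sum>j\<in>{n..<m}. sig j) * real (height p s m))"
proof (induction m rule: nat_induct_at_least)
  case base
  then show ?case using good_block[OF ln] by simp
next
  case (Suc m)
  let ?D = "\<Sum>j\<in>{n..<m}. sig j"
  let ?h = "real (height p s m)"
  have m1: "m \<ge> 1" using Suc n1 by simp
  have "good p s l (concat (map (seg m) [0..<p m])) (\<Sum>i\<in>{0..<p m}. ?D * ?h + real (s m i))"
    unfolding seg_def by (intro good_concat_upt good_append Suc.IH good_rep)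
  moreover have "(\<Sum>i\<in>{0..<p m}. ?D * ?h + real (s m i)) = real (p m) * ?D * ?h + real (\<Sum>i<p m. s m i)"
    by (simp add: sum.distrib atLeast0LessThan)
  ultimately have g: "good p s l (block p s (Suc m)) (real (p m) * ?D * ?h + real (\<Sum>i<p m. s m i))"
    unfolding blockS[OF m1] by simp
  have D0: "?D \<ge> 0" unfolding sig_def by (intro sum_nonneg divide_nonneg_nonneg) (auto intro: sum_nonneg)
  have hS: "real (height p s (Suc m)) = real (p m) * ?h + real (\<Sum>i<p m. s m i)"
    using height_Suc'[OF m1, of p s] by simp
  have hSpos: "real (height p s (Suc m)) > 0" using hpos[of "Suc m"] by simp
  have sigm: "sig m * real (height p s (Suc m)) = real (\<Sum>i<p m. s m i)"
    unfolding sig_def using hSpos by simp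
  have "real (p m) * ?D * ?h \<le> ?D * real (height p s (Suc m))"
  proof -
    have "0 \<le> ?D * real (\<Sum>i<p m. s m i)" by (intro mult_nonneg_nonneg D0 of_nat_0_le_iff)
    then show ?thesis using hS by (simp add: algebra_simps)
  qed
  then have "real (p m) * ?D * ?h + real (\<Sum>i<p m. s m i) \<le> (?D + sig m) * real (height p s (Suc m))"
    using sigm by (simp add: algebra_simps)
  moreover have "(\<Sum>j\<in>{n..<Suc m}. sig j) = ?D + sig m" using Suc by simp
  ultimately show ?case using g good_mono by metis
qed

lemma full': "n \<le> m \<Longrightarrow> good p s l (block p s m) (\<delta> * real (height p s m))"
proof -
  assume a: "n \<le> m"
  have "(\<Sum>j\<in>{n..<m}. sig j) \<le> \<delta>" using tail[OF a] unfolding sig_def .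
  then have "(\<Sum>j\<in>{n..<m}. sig j) * real (height p s m) \<le> \<delta> * real (height p s m)"
    by (intro mult_right_mono) auto
  then show ?thesis using full[OF a] good_mono by blast
qed

lemma seg_good: "n \<le> m \<Longrightarrow> i < p m \<Longrightarrow> good p s l (seg m i) (2 * \<delta> * real (length (seg m i)))"
proof -
  assume a: "n \<le> m" "i < p m"
  have "good p s l (seg m i) (\<delta> * real (height p s m) + real (s m i))"
    unfolding seg_def by (intro good_append full'[OF a(1)] good_rep)
  moreover have "\<delta> * real (height p s m) + real (s m i) \<le> 2 * \<delta> * real (length (seg m i))"
  proof -
    have "0 \<le> \<delta> * (2 * real (s m i))" using dpos by simp
    then show ?thesis using sp[OF a] by (simp add: len_seg algebra_simps)
  qed
  ultimately show ?thesis using good_mono by blast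
qed

lemma segs_good: "n \<le> m \<Longrightarrow> b \<le> p m \<Longrightarrow>
   good p s l (concat (map (seg m) [a..<b])) (2 * \<delta> * real (length (concat (map (seg m) [a..<b]))))"
proof -
  assume a: "n \<le> m" "b \<le> p m"
  have "good p s l (concat (map (seg m) [a..<b])) (\<Sum>i\<in>{a..<b}. 2 * \<delta> * real (length (seg m i)))"
    using a by (intro good_concat_upt seg_good) auto
  then show ?thesis by (simp add: length_concat_upt sum_distrib_left)
qed

end



context R1 begin

lemma prefix_rep: "prefix us (replicate k x) \<Longrightarrow> us = replicate (length us) x \<and> length us \<le> k"
  by (rule sublist_replicate) (rule prefix_imp_sublist)
lemma suffix_rep: "suffix us (replicate k x) \<Longrightarrow> us = replicate (length us) x \<and> length us \<le> k"
  by (rule sublist_replicate) (rule suffix_imp_sublist)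

lemma Pre_seg:
  assumes m: "n \<le> m" and i: "i < p m" and P: "prefix P (seg m i)"
    and IH: "\<And>P. prefix P (block p s m) \<Longrightarrow> good p s l P (2 * \<delta> * real (length P) + real (height p s n))"
  shows "good p s l P (2 * \<delta> * real (length P) + real (height p s n))"
proof -
  have "prefix P (block p s m @ replicate (s m i) 1)" using P unfolding seg_def .
  then consider "prefix P (block p s m)" | us where "P = block p s m @ us" "prefix us (replicate (s m i) 1)"
    unfolding prefix_append by blast
  then show ?thesis
  proof cases
    case 1
    then show ?thesis using IH by blast
  next
    case 2
    have us0: "us = replicate (length us) 1 \<and> length us \<le> s m i" by (rule prefix_rep[OF 2(2)])
    have us: "us = replicate (length us) 1" "length us \<le> s m i" using us0 by simp_all
    have "good p s l P (\<delta> * real (height p s m) + real (length us))"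
    proof -
      have "good p s l (replicate (length us) (1::nat)) (real (length us))" by (rule good_rep)
      then have "good p s l us (real (length us))" using us(1) by simp
      then show ?thesis unfolding 2(1) using full'[OF m] by (rule good_append[rotated])
    qed
    moreover have "\<delta> * real (height p s m) + real (length us) \<le> 2 * \<delta> * real (length P) + real (height p s n)"
    proof -
      have "real (length us) \<le> \<delta> * real (height p s m)" using us(2) sp[OF m i] by linarith
      moreover have "real (length P) \<ge> real (height p s m)" using 2(1) by (simp add: height_def)
      moreover have "\<delta> * real (height p s m) \<le> \<delta> * real (length P)" using calculation(2) dpos by simp
      ultimately show ?thesis by linarith
    qed
    ultimately show ?thesis using good_mono by blast
  qed
qed

lemma Pre: "n \<le> m \<Longrightarrow> prefix P (block p s m) \<Longrightarrow> good p s l P (2 * \<delta> * real (length P) + real (height p s n))"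
proof (induction m arbitrary: P rule: nat_induct_at_least)
  case base
  have "good p s l P (real (length P))" by (rule good_triv)
  moreover have "real (length P) \<le> real (height p s n)"
    using prefix_length_le[OF base] by (simp add: height_def)
  moreover have "0 \<le> 2 * \<delta> * real (length P)" using dpos by simp
  ultimately have "real (length P) \<le> 2 * \<delta> * real (length P) + real (height p s n)" by linarith
  then show ?case using good_mono \<open>good p s l P (real (length P))\<close> by blast
next
  case (Suc m)
  have m1: "m \<ge> 1" using Suc n1 by simp
  have "prefix P (concat (map (seg m) [0..<p m]))" using Suc.prems blockS[OF m1] by simp
  from prefix_concat_upt[OF this]
  obtain j P' where j: "j \<le> p m" "P = concat (map (seg m) [0..<j]) @ P'"
    "P' = [] \<or> (\<exists>i<p m. prefix P' (seg m i))" by blast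
  have g1: "good p s l (concat (map (seg m) [0..<j])) (2 * \<delta> * real (length (concat (map (seg m) [0..<j]))))"
    by (rule segs_good[OF Suc.hyps j(1)])
  have g2: "good p s l P' (2 * \<delta> * real (length P') + real (height p s n))"
  proof (cases "P' = []")
    case True
    have "0 \<le> 2 * \<delta> * real (length P') + real (height p s n)" using dpos by simp
    then show ?thesis using good_triv[of p s l "[]"] good_mono True by (metis list.size(3) of_nat_0)
  next
    case False
    then obtain i where "i < p m" "prefix P' (seg m i)" using j(3) by blast
    then show ?thesis using Pre_seg[OF Suc.hyps _ _ Suc.IH] by blast
  qed
  have "good p s l P (2 * \<delta> * real (length (concat (map (seg m) [0..<j]))) + (2 * \<delta> * real (length P') + real (height p s n)))"
    unfolding j(2) by (rule good_append[OF g1 g2])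
  then show ?case using j(2) by (simp add: algebra_simps)
qed

lemma good_nil: "0 \<le> b \<Longrightarrow> good p s l [] b"
  using good_triv[of p s l "[]"] good_mono by fastforce

lemma Pre_seg': "n \<le> m \<Longrightarrow> P = [] \<or> (\<exists>i<p m. prefix P (seg m i)) \<Longrightarrow>
   good p s l P (2 * \<delta> * real (length P) + real (height p s n))"
proof -
  assume m: "n \<le> m" and H: "P = [] \<or> (\<exists>i<p m. prefix P (seg m i))"
  show ?thesis
  proof (cases "P = []")
    case True
    have "0 \<le> 2 * \<delta> * real (length P) + real (height p s n)" using dpos by simp
    then show ?thesis using True good_nil by blast
  next
    case False
    then obtain i where i: "i < p m" "prefix P (seg m i)" using H by blast
    show ?thesis by (rule Pre_seg[OF m i Pre[OF m]])
  qed
qed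

definition SufP where "SufP S b \<longleftrightarrow> (\<exists>S0 q. S = S0 @ replicate q 1 \<and>
   good p s l S0 (4 * \<delta> * real (length S0) + real (height p s n)) \<and> real q \<le> b)"

lemma SufP_mono: "SufP S a \<Longrightarrow> a \<le> b \<Longrightarrow> SufP S b"
proof -
  assume "SufP S a" "a \<le> b"
  then obtain S0 q where "S = S0 @ replicate q 1"
   "good p s l S0 (4 * \<delta> * real (length S0) + real (height p s n))" "real q \<le> a" unfolding SufP_def by blast
  then show ?thesis unfolding SufP_def using \<open>a \<le> b\<close> by (intro exI[of _ S0] exI[of _ q]) simp
qed

lemma SufP_nil: "0 \<le> b \<Longrightarrow> SufP [] b"
proof -
  assume b: "0 \<le> b"
  have "good p s l [] (4 * \<delta> * real (length ([]::nat list)) + real (height p s n))"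
    by (intro good_nil) simp
  then show ?thesis unfolding SufP_def using b by (intro exI[of _ "[]"] exI[of _ 0]) simp
qed

lemma Suf_seg:
  assumes m: "n \<le> m" and i: "i < p m" and S: "suffix S (seg m i)"
    and IH: "\<And>S. suffix S (block p s m) \<Longrightarrow> SufP S (\<delta> * real (height p s m))"
  shows "SufP S (2 * \<delta> * real (height p s m))"
proof -
  have "suffix S (block p s m @ replicate (s m i) 1)" using S unfolding seg_def .
  then consider "suffix S (replicate (s m i) 1)" | xs' where "S = xs' @ replicate (s m i) 1" "suffix xs' (block p s m)"
    unfolding suffix_append by blast
  then show ?thesis
  proof cases
    case 1
    have us0: "S = replicate (length S) 1 \<and> length S \<le> s m i" by (rule suffix_rep[OF 1])
    have "real (length S) \<le> real (s m i)" using us0 by simp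
    moreover have "0 \<le> \<delta> * real (height p s m)" using dpos by simp
    ultimately have "real (length S) \<le> 2 * \<delta> * real (height p s m)"
      using sp[OF m i] by linarith
    moreover have "good p s l [] (4 * \<delta> * real (length ([]::nat list)) + real (height p s n))"
      by (intro good_nil) simp
    moreover have "S = [] @ replicate (length S) 1" using us0 by simp
    ultimately show ?thesis unfolding SufP_def
      by (intro exI[of _ "[]"] exI[of _ "length S"]) simp
  next
    case 2
    from IH[OF 2(2)] obtain S0 q where q: "xs' = S0 @ replicate q 1"
      "good p s l S0 (4 * \<delta> * real (length S0) + real (height p s n))" "real q \<le> \<delta> * real (height p s m)"
      unfolding SufP_def by blast
    have "S = S0 @ replicate (q + s m i) 1" using 2(1) q(1) by (simp add: replicate_add)
    moreover have "real (q + s m i) \<le> 2 * \<delta> * real (height p s m)" using q(3) sp[OF m i] by simp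
    ultimately show ?thesis unfolding SufP_def using q(2) by (intro exI[of _ S0] exI[of _ "q + s m i"]) simp
  qed
qed

lemma Suf: "n \<le> m \<Longrightarrow> suffix S (block p s m) \<Longrightarrow> SufP S (\<delta> * real (height p s m))"
proof (induction m arbitrary: S rule: nat_induct_at_least)
  case base
  have "good p s l S (real (length S))" by (rule good_triv)
  moreover have "real (length S) \<le> real (height p s n)"
    using suffix_length_le[OF base] by (simp add: height_def)
  moreover have "0 \<le> 4 * \<delta> * real (length S)" using dpos by simp
  ultimately have "good p s l S (4 * \<delta> * real (length S) + real (height p s n))"
    using good_mono by (metis add_increasing)
  moreover have "0 \<le> \<delta> * real (height p s n)" using dpos by simp
  ultimately show ?case unfolding SufP_def by (intro exI[of _ S] exI[of _ 0]) simp
next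
  case (Suc m)
  have m1: "m \<ge> 1" using Suc n1 by simp
  have hd: "2 * real (height p s m) \<le> real (height p s (Suc m))" using hdouble[OF m1] .
  have "suffix S (concat (map (seg m) [0..<p m]))" using Suc.prems blockS[OF m1] by simp
  from suffix_concat_upt[OF this]
  obtain j S' where j: "j \<le> p m" "S = S' @ concat (map (seg m) [j..<p m])"
    "S' = [] \<or> (\<exists>i<p m. suffix S' (seg m i))" by blast
  have S': "SufP S' (2 * \<delta> * real (height p s m))"
  proof (cases "S' = []")
    case True
    have "0 \<le> 2 * \<delta> * real (height p s m)" using dpos by simp
    then show ?thesis using True SufP_nil by blast
  next
    case False
    then obtain i where "i < p m" "suffix S' (seg m i)" using j(3) by blast
    then show ?thesis using Suf_seg[OF Suc.hyps _ _ Suc.IH] by blast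
  qed
  then obtain S0' q' where q': "S' = S0' @ replicate q' 1"
      "good p s l S0' (4 * \<delta> * real (length S0') + real (height p s n))" "real q' \<le> 2 * \<delta> * real (height p s m)"
      unfolding SufP_def by blast
  have hd2: "2 * \<delta> * real (height p s m) \<le> \<delta> * real (height p s (Suc m))"
    using mult_left_mono[OF hd, of \<delta>] dpos by simp
  show ?case
  proof (cases "j = p m")
    case True
    then have "S = S'" using j(2) by simp
    then show ?thesis using SufP_mono[OF S' hd2] by simp
  next
    case False
    define k where "k = p m - 1"
    have jk: "j \<le> k" "k < p m" "Suc k = p m" using False j(1) p2 m1 unfolding k_def by auto
    have "[j..<p m] = [j..<k] @ [k]" using jk by (metis upt_Suc_append)
    then have Seq: "S = (S0' @ replicate q' 1 @ concat (map (seg m) [j..<k]) @ block p s m) @ replicate (s m k) 1"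
      using j(2) q'(1) by (simp add: seg_def)
    define C1 where "C1 = concat (map (seg m) [j..<k])"
    have gC: "good p s l C1 (2 * \<delta> * real (length C1))" unfolding C1_def
      by (rule segs_good[OF Suc.hyps]) (use jk in simp)
    have gS0: "good p s l (S0' @ replicate q' 1 @ C1 @ block p s m)
       (4 * \<delta> * real (length S0') + real (height p s n) + (real q' + (2 * \<delta> * real (length C1) + \<delta> * real (height p s m))))"
      by (intro good_append q'(2) good_rep gC full'[OF Suc.hyps])
    have "4 * \<delta> * real (length S0') + real (height p s n) + (real q' + (2 * \<delta> * real (length C1) + \<delta> * real (height p s m)))
      \<le> 4 * \<delta> * real (length (S0' @ replicate q' 1 @ C1 @ block p s m)) + real (height p s n)"
    proof -
      have "0 \<le> \<delta> * real (length C1)" "0 \<le> \<delta> * real q'" using dpos by simp_all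
      then show ?thesis using q'(3) by (simp add: height_def algebra_simps)
    qed
    then have gS0': "good p s l (S0' @ replicate q' 1 @ C1 @ block p s m)
       (4 * \<delta> * real (length (S0' @ replicate q' 1 @ C1 @ block p s m)) + real (height p s n))"
      using gS0 good_mono by blast
    have "real (s m k) \<le> \<delta> * real (height p s (Suc m))"
    proof -
      have "0 \<le> \<delta> * real (height p s m)" using dpos by simp
      then show ?thesis using sp[OF Suc.hyps jk(2)] hd2 by linarith
    qed
    then show ?thesis unfolding SufP_def using Seq gS0' unfolding C1_def
      by (intro exI[of _ "S0' @ replicate q' 1 @ concat (map (seg m) [j..<k]) @ block p s m"] exI[of _ "s m k"]) simp
  qed
qed

end



context R1 begin

definition WinP where "WinP W b \<longleftrightarrow> (\<exists>A t C a c. W = A @ replicate t 1 @ C \<and>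
   good p s l A a \<and> good p s l C c \<and> a + c \<le> b)"

lemma Win: "n \<le> m \<Longrightarrow> sublist W (block p s m) \<Longrightarrow>
   WinP W (4 * \<delta> * real (length W) + 2 * real (height p s n))"
proof (induction m arbitrary: W rule: nat_induct_at_least)
  case base
  have "good p s l W (real (length W))" by (rule good_triv)
  moreover have "good p s l [] 0" by (rule good_nil) simp
  moreover have "real (length W) \<le> real (height p s n)"
    using sublist_length_le[OF base] by (simp add: height_def)
  moreover have "0 \<le> 4 * \<delta> * real (length W)" using dpos by simp
  ultimately show ?case unfolding WinP_def
    by (intro exI[of _ W] exI[of _ 0] exI[of _ "[]"] exI[of _ "real (length W)"] exI[of _ 0]) simp
next
  case (Suc m)
  have m1: "m \<ge> 1" using Suc n1 by simp
  have hn0: "0 \<le> real (height p s n)" by simp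
  have "sublist W (concat (map (seg m) [0..<p m]))" using Suc.prems blockS[OF m1] by simp
  from sublist_concat_upt[OF this]
  consider (one) i where "i < p m" "sublist W (seg m i)"
    | (many) S a b P where "W = S @ concat (map (seg m) [a..<b]) @ P" "b \<le> p m"
        "S = [] \<or> (\<exists>i<p m. suffix S (seg m i))" "P = [] \<or> (\<exists>i<p m. prefix P (seg m i))"
    by blast
  then show ?case
  proof cases
    case one
    have "sublist W (block p s m @ replicate (s m i) 1)" using one(2) unfolding seg_def .
    then consider "sublist W (block p s m)" | "sublist W (replicate (s m i) 1)"
      | W1 W2 where "W = W1 @ W2" "suffix W1 (block p s m)" "prefix W2 (replicate (s m i) 1)"
      unfolding sublist_append by blast
    then show ?thesis
    proof cases
      case 1
      then show ?thesis using Suc.IH by blast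
    next
      case 2
      have w: "W = replicate (length W) 1 \<and> length W \<le> s m i" by (rule sublist_replicate[OF 2])
      have "W = [] @ replicate (length W) 1 @ []" using w by simp
      moreover have "good p s l [] 0" by (rule good_nil) simp
      moreover have "0 + 0 \<le> 4 * \<delta> * real (length W) + 2 * real (height p s n)" using dpos by simp
      ultimately show ?thesis unfolding WinP_def by blast
    next
      case 3
      have w: "W2 = replicate (length W2) 1 \<and> length W2 \<le> s m i" by (rule prefix_rep[OF 3(3)])
      from Suf[OF Suc.hyps 3(2)] obtain S0 q where q: "W1 = S0 @ replicate q 1"
        "good p s l S0 (4 * \<delta> * real (length S0) + real (height p s n))"
        unfolding SufP_def by blast
      have "W = S0 @ replicate (q + length W2) 1 @ []" using 3(1) q(1) w by (simp add: replicate_add)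
      moreover have "good p s l [] 0" by (rule good_nil) simp
      moreover have "4 * \<delta> * real (length S0) + real (height p s n) + 0 \<le> 4 * \<delta> * real (length W) + 2 * real (height p s n)"
      proof -
        have "length S0 \<le> length W" using 3(1) q(1) by simp
        then have "4 * \<delta> * real (length S0) \<le> 4 * \<delta> * real (length W)" using dpos by simp
        then show ?thesis using hn0 by linarith
      qed
      ultimately show ?thesis unfolding WinP_def using q(2) by blast
    qed
  next
    case many
    have S': "SufP S (2 * \<delta> * real (height p s m))"
    proof (cases "S = []")
      case True
      have "0 \<le> 2 * \<delta> * real (height p s m)" using dpos by simp
      then show ?thesis using True SufP_nil by blast
    next
      case False
      then obtain i where "i < p m" "suffix S (seg m i)" using many(3) by blast
      then show ?thesis using Suf_seg[OF Suc.hyps _ _ Suf[OF Suc.hyps]] by blast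
    qed
    then obtain S0 q where q: "S = S0 @ replicate q 1"
      "good p s l S0 (4 * \<delta> * real (length S0) + real (height p s n))"
      unfolding SufP_def by blast
    define Cc where "Cc = concat (map (seg m) [a..<b])"
    have gC: "good p s l Cc (2 * \<delta> * real (length Cc))" unfolding Cc_def
      by (rule segs_good[OF Suc.hyps many(2)])
    have gP: "good p s l P (2 * \<delta> * real (length P) + real (height p s n))"
      by (rule Pre_seg'[OF Suc.hyps many(4)])
    have gCP: "good p s l (Cc @ P) (2 * \<delta> * real (length Cc) + (2 * \<delta> * real (length P) + real (height p s n)))"
      by (rule good_append[OF gC gP])
    have "W = S0 @ replicate q 1 @ (Cc @ P)" using many(1) q(1) unfolding Cc_def by simp
    moreover have "4 * \<delta> * real (length S0) + real (height p s n) + (2 * \<delta> * real (length Cc) + (2 * \<delta> * real (length P) + real (height p s n)))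
       \<le> 4 * \<delta> * real (length W) + 2 * real (height p s n)"
    proof -
      have "length W = length S0 + q + length Cc + length P" using many(1) q(1) unfolding Cc_def by simp
      moreover have "0 \<le> \<delta> * real q" "0 \<le> \<delta> * real (length Cc)" "0 \<le> \<delta> * real (length P)" using dpos by simp_all
      ultimately show ?thesis by (simp add: algebra_simps)
    qed
    ultimately show ?thesis unfolding WinP_def using q(2) gCP by blast
  qed
qed

end



theorem mainTheorem7:
  fixes p :: "nat \<Rightarrow> nat" and s :: "nat \<Rightarrow> nat \<Rightarrow> nat"
    and \<epsilon> :: real and l :: nat
  assumes "rank_one_params p s" and "reasonable p s"
    and "\<epsilon> > 0" and "l \<ge> 1"
  shows "\<exists>N0. \<forall>N\<ge>N0. \<forall>\<omega>\<in>symbolic_model p s.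
           \<exists>A Bw C OA OC t. map \<omega> [1..int N] = A @ Bw @ C \<and> Bw = replicate t 1 \<and>
             block_occurrences p s l A OA \<and> block_occurrences p s l C OC \<and>
             real (uncovered p s A OA + uncovered p s C OC) \<le> \<epsilon> * real N"
proof -
  define \<delta> where "\<delta> = \<epsilon> / 8"
  have dpos: "\<delta> > 0" using assms(3) unfolding \<delta>_def by simp
  have p2: "\<forall>m\<ge>1. p m \<ge> 2" using assms(1) unfolding rank_one_params_def by blast
  define f where "f = (\<lambda>k. real (\<Sum>i<p (Suc k). s (Suc k) i) / real (height p s (Suc (Suc k))))"
  have summ: "summable f" using assms(1) unfolding rank_one_params_def f_def by blast
  obtain n0 where n0: "\<And>m. m \<ge> n0 \<Longrightarrow> real (spacer_max p s m) \<le> \<delta> * real (height p s m)"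
    using assms(2) dpos unfolding reasonable_def by blast
  obtain N1 where N1: "\<And>a b. a \<ge> N1 \<Longrightarrow> norm (\<Sum>k=a..b. f k) < \<delta>"
    using summable_partial_sum_bound[OF summ dpos] by blast
  define n where "n = max (max n0 (N1 + 1)) (max l 1)"
  have f0: "\<And>k. f k \<ge> 0" unfolding f_def by (intro divide_nonneg_nonneg of_nat_0_le_iff)
  interpret R: R1 p s l n \<delta>
  proof (unfold_locales)
    show "n \<ge> 1" "l \<le> n" unfolding n_def by auto
    show "\<delta> > 0" by (rule dpos)
    show "\<forall>m\<ge>1. p m \<ge> 2" by (rule p2)
  next
    fix m i assume m: "n \<le> m" and i: "i < p m"
    have eq: "{s m i | i. i < p m} = s m ` {..<p m}" by auto
    have "s m i \<le> spacer_max p s m" unfolding spacer_max_def eq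
      using i by (intro Max_ge) auto
    moreover have "m \<ge> n0" using m unfolding n_def by simp
    ultimately show "real (s m i) \<le> \<delta> * real (height p s m)" using n0[of m] by linarith
  next
    fix m assume m: "n \<le> m"
    let ?\<sigma> = "\<lambda>j. real (\<Sum>i<p j. s j i) / real (height p s (Suc j))"
    have n1: "n \<ge> 1" unfolding n_def by simp
    have "(\<Sum>j\<in>{n..<m}. ?\<sigma> j) = (\<Sum>j\<in>{(n-1)+1..<(m-1)+1}. ?\<sigma> j)" using n1 m by simp
    also have "\<dots> = (\<Sum>j\<in>{n-1..<m-1}. ?\<sigma> (j + 1))" by (rule sum.shift_bounds_nat_ivl)
    also have "\<dots> = (\<Sum>j\<in>{n-1..<m-1}. f j)" unfolding f_def by simp
    also have "\<dots> \<le> \<delta>"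
    proof (cases "m - 1 \<le> n - 1")
      case True
      then show ?thesis using dpos by simp
    next
      case False
      then obtain b where b: "m - 1 = Suc b" by (metis not0_implies_Suc not_le not_less0 zero_less_iff_neq_zero)
      have "{n-1..<m-1} = {n-1..b}" using b by auto
      moreover have "n - 1 \<ge> N1" unfolding n_def by simp
      ultimately have "norm (\<Sum>j\<in>{n-1..<m-1}. f j) < \<delta>" using N1 by simp
      moreover have "(\<Sum>j\<in>{n-1..<m-1}. f j) \<ge> 0" using f0 by (intro sum_nonneg) auto
      ultimately show ?thesis by simp
    qed
    finally show "(\<Sum>j\<in>{n..<m}. ?\<sigma> j) \<le> \<delta>" .
  qed
  define hn where "hn = real (height p s n)"
  define N0 where "N0 = nat \<lceil>4 * hn / \<epsilon>\<rceil> + 1"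
  show ?thesis
  proof (intro exI[of _ N0] allI impI ballI)
    fix N \<omega> assume N: "N \<ge> N0" and \<omega>: "\<omega> \<in> symbolic_model p s"
    define W where "W = map \<omega> [1..int N]"
    have N1': "N \<ge> 1" using N unfolding N0_def by simp
    have "\<forall>a b. a \<le> b \<longrightarrow> (\<exists>m\<ge>1. sublist (map \<omega> [a..b]) (block p s m))"
      using \<omega> unfolding symbolic_model_def by simp
    then have "\<exists>m\<ge>1. sublist W (block p s m)" unfolding W_def using N1' by simp
    then obtain m where m: "m \<ge> 1" "sublist W (block p s m)" by blast
    define M where "M = max m n"
    have "prefix (block p s m) (block p s M)" unfolding M_def by (intro block_prefix_mono[OF p2]) simp
    then have "sublist W (block p s M)" using m(2)
      by (meson prefix_imp_sublist sublist_order.dual_order.trans)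
    from R.Win[OF _ this] have "R.WinP W (4 * \<delta> * real (length W) + 2 * hn)"
      unfolding M_def hn_def by simp
    then obtain A t C a c where AC: "W = A @ replicate t 1 @ C" "good p s l A a" "good p s l C c"
      "a + c \<le> 4 * \<delta> * real (length W) + 2 * hn" unfolding R.WinP_def by blast
    obtain OA where OA: "block_occurrences p s l A OA" "real (uncovered p s A OA) \<le> a"
      using AC(2) unfolding good_def by blast
    obtain OC where OC: "block_occurrences p s l C OC" "real (uncovered p s C OC) \<le> c"
      using AC(3) unfolding good_def by blast
    have lW: "length W = N" unfolding W_def by simp
    have "real N \<ge> 4 * hn / \<epsilon>"
    proof -
      have "nat \<lceil>4 * hn / \<epsilon>\<rceil> \<le> N" using N unfolding N0_def by linarith
      then have "real N \<ge> real (nat \<lceil>4 * hn / \<epsilon>\<rceil>)" by (rule of_nat_mono)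
      moreover have "real (nat \<lceil>4 * hn / \<epsilon>\<rceil>) \<ge> 4 * hn / \<epsilon>" by (rule real_nat_ceiling_ge)
      ultimately show ?thesis by linarith
    qed
    then have "\<epsilon> * real N \<ge> 4 * hn" using assms(3) by (simp add: field_simps)
    then have "4 * \<delta> * real (length W) + 2 * hn \<le> \<epsilon> * real N" unfolding lW \<delta>_def by simp
    then have "real (uncovered p s A OA + uncovered p s C OC) \<le> \<epsilon> * real N"
      using OA(2) OC(2) AC(4) by simp
    then show "\<exists>A Bw C OA OC t. map \<omega> [1..int N] = A @ Bw @ C \<and> Bw = replicate t 1 \<and>
             block_occurrences p s l A OA \<and> block_occurrences p s l C OC \<and>
             real (uncovered p s A OA + uncovered p s C OC) \<le> \<epsilon> * real N"
      using AC(1) OA(1) OC(1) unfolding W_def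
      by (intro exI[of _ A] exI[of _ "replicate t 1"] exI[of _ C] exI[of _ OA] exI[of _ OC] exI[of _ t]) simp
  qed
qed


end
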